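(* Let $G$ be an $(a\times b)$ simple grid and $c:V(G)\to\{1,2,3\}$ a proper coloring. For every simple directed cycle $C$ in $G$ (no repeated nodes), $b(C)=0$.
   Context: An $(a\times b)$ simple grid has node set $\{(i,j): i\in[a], j\in[b]\}$, with $(i,j)$ and $(i',j')$ adjacent iff $|i-i'|+|j-j'|=1$. Given a graph $G=(V,E)$ with a proper coloring $c:V\to\{1,2,3\}$, for an edge $\{u,v\}\in E$ define $a(u,v)=c(u)-c(v)$ if $c(u)\ne 3$ and $c(v)\ne 3$, and $a(u,v)=0$ otherwise. For a directed path or directed cycle $H$ (a path or cycle of $G$ with its edges oriented consistently along it), define $b(H)=\sum_{(u,v)\in H}a(u,v)$, the sum over its directed edges; a path of length zero has $b$-value $0$. *)

theory Defs
  imports Main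
begin

definition grid_nodes :: "nat \<Rightarrow> nat \<Rightarrow> (nat \<times> nat) set" where
  "grid_nodes a b = {1..a} \<times> {1..b}"

definition grid_adj :: "nat \<times> nat \<Rightarrow> nat \<times> nat \<Rightarrow> bool" where
  "grid_adj u v \<longleftrightarrow>
     \<bar>int (fst u) - int (fst v)\<bar> + \<bar>int (snd u) - int (snd v)\<bar> = 1"

definition proper_3coloring :: "nat \<Rightarrow> nat \<Rightarrow> (nat \<times> nat \<Rightarrow> int) \<Rightarrow> bool" where
  "proper_3coloring a b c \<longleftrightarrow>
     (\<forall>v \<in> grid_nodes a b. c v \<in> {1, 2, 3}) \<and>
     (\<forall>u \<in> grid_nodes a b. \<forall>v \<in> grid_nodes a b. grid_adj u v \<longrightarrow> c u \<noteq> c v)"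

definition aval :: "(nat \<times> nat \<Rightarrow> int) \<Rightarrow> nat \<times> nat \<Rightarrow> nat \<times> nat \<Rightarrow> int" where
  "aval c u v = (if c u \<noteq> 3 \<and> c v \<noteq> 3 then c u - c v else 0)"

definition grid_dir_cycle :: "nat \<Rightarrow> nat \<Rightarrow> (nat \<times> nat) list \<Rightarrow> bool" where
  "grid_dir_cycle a b vs \<longleftrightarrow>
     length vs \<ge> 3 \<and> distinct vs \<and> set vs \<subseteq> grid_nodes a b \<and>
     (\<forall>i < length vs. grid_adj (vs ! i) (vs ! ((i + 1) mod length vs)))"

definition bval_cycle :: "(nat \<times> nat \<Rightarrow> int) \<Rightarrow> (nat \<times> nat) list \<Rightarrow> int" where
  "bval_cycle c vs = (\<Sum>i < length vs. aval c (vs ! i) (vs ! ((i + 1) mod length vs)))"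

end

theory Submission
  imports Defs
begin

lemma aval_anti: "aval c u v = - aval c v u"
  unfolding aval_def by auto

lemma sq_colors:
  fixes x y z w :: int
  assumes "x \<in> {1,2,3}" "y \<in> {1,2,3}" "z \<in> {1,2,3}" "w \<in> {1,2,3}"
    "x \<noteq> y" "y \<noteq> z" "z \<noteq> w" "w \<noteq> x"
  shows "(if x \<noteq> 3 \<and> y \<noteq> 3 then x - y else 0) + (if y \<noteq> 3 \<and> z \<noteq> 3 then y - z else 0)
       + (if z \<noteq> 3 \<and> w \<noteq> 3 then z - w else 0) + (if w \<noteq> 3 \<and> x \<noteq> 3 then w - x else 0) = 0"
  using assms by auto

lemma square:
  assumes P: "proper_3coloring a b c" and "p \<in> grid_nodes a b" "q \<in> grid_nodes a b"
    "r \<in> grid_nodes a b" "s \<in> grid_nodes a b"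
    "grid_adj p q" "grid_adj q r" "grid_adj r s" "grid_adj s p"
  shows "aval c p q + aval c q r + aval c r s + aval c s p = 0"
proof -
  from P have col: "\<forall>v \<in> grid_nodes a b. c v \<in> {1, 2, 3}"
    and pr: "\<forall>u \<in> grid_nodes a b. \<forall>v \<in> grid_nodes a b. grid_adj u v \<longrightarrow> c u \<noteq> c v"
    unfolding proper_3coloring_def by auto
  show ?thesis unfolding aval_def
    by (rule sq_colors) (use col pr assms in auto)
qed

fun rw :: "(nat \<times> nat \<Rightarrow> int) \<Rightarrow> nat \<Rightarrow> int" where
  "rw c 0 = 0"
| "rw c (Suc j) = rw c j - aval c (1, j) (1, Suc j)"

fun ph :: "(nat \<times> nat \<Rightarrow> int) \<Rightarrow> nat \<Rightarrow> nat \<Rightarrow> int" where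
  "ph c 0 j = 0"
| "ph c (Suc i) j = (if i = 0 then rw c j else ph c i j - aval c (i, j) (Suc i, j))"

lemma vert: "1 \<le> i \<Longrightarrow> aval c (i,j) (Suc i, j) = ph c i j - ph c (Suc i) j"
  by (cases i) auto

lemma horiz:
  assumes P: "proper_3coloring a b c"
  shows "1 \<le> i \<Longrightarrow> i \<le> a \<Longrightarrow> 1 \<le> j \<Longrightarrow> Suc j \<le> b \<Longrightarrow>
    aval c (i,j) (i, Suc j) = ph c i j - ph c i (Suc j)"
proof (induction i)
  case 0 then show ?case by simp
next
  case (Suc i)
  show ?case
  proof (cases "i = 0")
    case True then show ?thesis by simp
  next
    case False
    have IH: "aval c (i,j) (i, Suc j) = ph c i j - ph c i (Suc j)"
      using Suc False by auto
    have sq: "aval c (i,j) (i,Suc j) + aval c (i,Suc j) (Suc i,Suc j) + aval c (Suc i,Suc j) (Suc i,j)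
        + aval c (Suc i,j) (i,j) = 0"
      by (rule square[OF P]) (use Suc False in \<open>auto simp: grid_nodes_def grid_adj_def\<close>)
    have "ph c (Suc i) j = ph c i j - aval c (i, j) (Suc i, j)"
      "ph c (Suc i) (Suc j) = ph c i (Suc j) - aval c (i, Suc j) (Suc i, Suc j)"
      using False by auto
    then show ?thesis using IH sq aval_anti[of c "(Suc i, Suc j)" "(Suc i, j)"]
        aval_anti[of c "(Suc i, j)" "(i, j)"] by linarith
  qed
qed

lemma edge:
  assumes P: "proper_3coloring a b c" and "u \<in> grid_nodes a b" "v \<in> grid_nodes a b" "grid_adj u v"
  shows "aval c u v = ph c (fst u) (snd u) - ph c (fst v) (snd v)"
proof -
  obtain i j k l where u: "u = (i,j)" and v: "v = (k,l)" by (cases u, cases v) auto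
  have g: "1 \<le> i" "i \<le> a" "1 \<le> j" "j \<le> b" "1 \<le> k" "k \<le> a" "1 \<le> l" "l \<le> b"
    using assms u v by (auto simp: grid_nodes_def)
  have "\<bar>int i - int k\<bar> + \<bar>int j - int l\<bar> = 1" using assms(4) u v by (simp add: grid_adj_def)
  then have "(i = k \<and> l = Suc j) \<or> (i = k \<and> j = Suc l) \<or> (j = l \<and> k = Suc i) \<or> (j = l \<and> i = Suc k)"
    by arith
  then show ?thesis
  proof (elim disjE conjE)
    assume "i = k" "l = Suc j" then show ?thesis using horiz[OF P, of i j] g u v by simp
  next
    assume "i = k" "j = Suc l" then show ?thesis using horiz[OF P, of i l] g u v aval_anti[of c u v] by simp
  next
    assume "j = l" "k = Suc i" then show ?thesis using vert[of i c j] g u v by simp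
  next
    assume "j = l" "i = Suc k" then show ?thesis using vert[of k c j] g u v aval_anti[of c u v] by simp
  qed
qed

lemma telescope:
  fixes f :: "nat \<Rightarrow> int"
  assumes "n > 0"
  shows "(\<Sum>i<n. f i - f ((i+1) mod n)) = 0"
proof -
  obtain m where n: "n = Suc m" using assms by (cases n) auto
  have "(\<Sum>i<Suc m. f ((i+1) mod Suc m)) = (\<Sum>i<m. f ((i+1) mod Suc m)) + f 0"
    by (simp add: sum.lessThan_Suc)
  also have "(\<Sum>i<m. f ((i+1) mod Suc m)) = (\<Sum>i<m. f (Suc i))"
    by (rule sum.cong) auto
  also have "(\<Sum>i<m. f (Suc i)) + f 0 = (\<Sum>i<Suc m. f i)"
    by (simp only: sum.lessThan_Suc_shift)
  finally show ?thesis using n by (simp add: sum_subtractf)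
qed

theorem mainTheorem10:
  fixes a b :: nat and c :: "nat \<times> nat \<Rightarrow> int" and C :: "(nat \<times> nat) list"
  assumes "proper_3coloring a b c"
    and "grid_dir_cycle a b C"
  shows "bval_cycle c C = 0"
proof -
  let ?n = "length C"
  let ?f = "\<lambda>i. ph c (fst (C ! i)) (snd (C ! i))"
  have cyc: "?n \<ge> 3" "set C \<subseteq> grid_nodes a b"
    "\<forall>i < ?n. grid_adj (C ! i) (C ! ((i + 1) mod ?n))"
    using assms(2) unfolding grid_dir_cycle_def by auto
  have "bval_cycle c C = (\<Sum>i<?n. ?f i - ?f ((i+1) mod ?n))"
    unfolding bval_cycle_def
  proof (rule sum.cong)
    fix i assume "i \<in> {..<?n}"
    then have i: "i < ?n" by simp
    have m: "(i+1) mod ?n < ?n" using cyc(1) by (intro mod_less_divisor) linarith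
    show "aval c (C ! i) (C ! ((i + 1) mod ?n)) = ?f i - ?f ((i+1) mod ?n)"
      by (rule edge[OF assms(1)]) (use i m cyc in auto)
  qed simp
  also have "\<dots> = 0" by (rule telescope) (use cyc(1) in linarith)
  finally show ?thesis .
qed

end
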